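(* Let $p$ be a prime and let $q$ be a prime with $p < q < 2p-1$ such that $2p-1$ is prime and $\{p, q, 2p-1\}$ is a symmetric triple. Write $q = p + d$. Then $d = \frac{p-1}{3}$ or $d = \frac{p-1}{2}$.
   Context: Two distinct primes $p$ and $q$ form a symmetric pair if $\gcd(p-1, q-1) = |p-q|$. A symmetric triple is a set of three primes such that any two of them form a symmetric pair. *)

theory Defs
  imports Complex_Main "HOL-Computational_Algebra.Primes"
begin

definition symmetric_pair :: "nat \<Rightarrow> nat \<Rightarrow> bool" where
  "symmetric_pair p q \<longleftrightarrow> prime p \<and> prime q \<and> p \<noteq> q \<and>
     int (gcd (p - 1) (q - 1)) = \<bar>int p - int q\<bar>"

definition symmetric_triple :: "nat \<Rightarrow> nat \<Rightarrow> nat \<Rightarrow> bool" where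
  "symmetric_triple a b c \<longleftrightarrow>
     symmetric_pair a b \<and> symmetric_pair a c \<and> symmetric_pair b c"

end

theory Submission
  imports Defs
begin

theorem theorem1:
  fixes p q d :: nat
  assumes "prime p" and "prime q" and "p < q" and "q < 2 * p - 1"
    and "prime (2 * p - 1)"
    and "symmetric_triple p q (2 * p - 1)"
    and "q = p + d"
  shows "real d = (real p - 1) / 3 \<or> real d = (real p - 1) / 2"
proof -
  have p2: "p \<ge> 2" using assms(1) prime_ge_2_nat by blast
  have g1: "gcd (p - 1) (q - 1) = d" using assms(6,7) unfolding symmetric_triple_def symmetric_pair_def
    by auto
  have g2i: "int (gcd (q - 1) (2 * p - 1 - 1)) = int p - (int d + 1)" using assms(3,4,6,7)
    unfolding symmetric_triple_def symmetric_pair_def by auto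
  have g2: "gcd (q - 1) (2 * p - 1 - 1) = p - 1 - d" using g2i by linarith
  have "d dvd p - 1" using g1 by (metis gcd_dvd1)
  then obtain k where k: "p - 1 = d * k" by (auto simp: dvd_def)
  have dpos: "d > 0" using assms(3,7) by simp
  have "p - 1 - d dvd q - 1" using g2 by (metis gcd_dvd1)
  moreover have "q - 1 = d * (k + 1)" using k assms(7) p2 by (simp add: algebra_simps)
  moreover have "p - 1 - d = d * (k - 1)" using k by (simp add: algebra_simps diff_mult_distrib2)
  ultimately have "d * (k - 1) dvd d * (k + 1)" by simp
  hence dv: "k - 1 dvd k + 1" using dpos using nat_mult_dvd_cancel_disj[of d "k - 1" "k + 1"] by simp
  have "k \<ge> 2"
  proof (rule ccontr)
    assume "\<not> k \<ge> 2"
    hence "k = 0 \<or> k = 1" by auto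
    thus False using k p2 assms(3,4,7) by auto
  qed
  hence "k + 1 = (k - 1) + 2" by simp
  with dv have "k - 1 dvd (k - 1) + 2" by simp
  hence "k - 1 dvd 2" using dvd_add_right_iff[of "k - 1" "k - 1" 2] by simp
  hence "k - 1 \<le> 2" by (simp add: dvd_imp_le)
  moreover have "k - 1 \<noteq> 0" using \<open>k \<ge> 2\<close> by simp
  ultimately have "k = 2 \<or> k = 3" by auto
  moreover have "real p - 1 = real d * real k" using k p2
    by (metis of_nat_1 of_nat_diff of_nat_mult le_trans one_le_numeral)
  ultimately show ?thesis by auto
qed

end
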